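(* Let $\mathfrak n$ be the $7$-dimensional real Lie algebra with basis $\{u_1,u_2,z,v_1,v_2,e_1,e_2\}$ whose only nonzero brackets (up to antisymmetry) are $[e_1,e_2]=z$, $[v_1,v_2]=z$, $[e_1,v_1]=u_1$, $[e_2,v_1]=u_2$, $[e_1,v_2]=u_2$, $[e_2,v_2]=-u_1$, and let $N$ be the corresponding simply connected Lie group with the left-invariant pseudo-Riemannian metric whose only nonzero inner products on basis vectors are $\langle u_i,v_j\rangle=\delta_{ij}$, $\langle z,z\rangle=\varepsilon$, $\langle e_a,e_a\rangle=\bar\varepsilon_a$ ($a=1,2$), where $\varepsilon,\bar\varepsilon_1,\bar\varepsilon_2\in\{1,-1\}$. Then this metric is not a nilsoliton.
   Context: $\mathrm{Ric}$ denotes the Ricci operator of the left-invariant metric ($\langle\mathrm{Ric}\,x,y\rangle=\varrho(x,y)$, $\varrho$ the Ricci tensor). The metric is a nilsoliton if $\mathrm{Ric}=c\cdot\mathrm{Id}+D$ for some $c\in\mathbb R$ and some derivation $D$ of $\mathfrak n$. *)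

theory Defs
  imports "HOL-Analysis.Analysis"
begin

text \<open>A Lie algebra with basis indexed by a finite type 'i is given by structure constants
  C i j k (coefficient of the k-th basis vector in the bracket of the i-th and j-th);
  a (left-invariant) metric by its Gram matrix g i j on the basis.\<close>

definition lbr :: "('i::finite \<Rightarrow> 'i \<Rightarrow> 'i \<Rightarrow> real) \<Rightarrow> real^'i \<Rightarrow> real^'i \<Rightarrow> real^'i" where
  "lbr C x y = (\<chi> k. \<Sum>i\<in>UNIV. \<Sum>j\<in>UNIV. x$i * y$j * C i j k)"

definition ip :: "('i::finite \<Rightarrow> 'i \<Rightarrow> real) \<Rightarrow> real^'i \<Rightarrow> real^'i \<Rightarrow> real" where
  "ip g x y = (\<Sum>i\<in>UNIV. \<Sum>j\<in>UNIV. x$i * y$j * g i j)"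

text \<open>Levi-Civita connection of the left-invariant metric (Koszul formula).\<close>
definition LC :: "('i::finite \<Rightarrow> 'i \<Rightarrow> real) \<Rightarrow> ('i \<Rightarrow> 'i \<Rightarrow> 'i \<Rightarrow> real)
    \<Rightarrow> real^'i \<Rightarrow> real^'i \<Rightarrow> real^'i" where
  "LC g C x y = (THE w. \<forall>z. ip g w z =
      (ip g (lbr C x y) z - ip g (lbr C y z) x + ip g (lbr C z x) y) / 2)"

definition curv :: "('i::finite \<Rightarrow> 'i \<Rightarrow> real) \<Rightarrow> ('i \<Rightarrow> 'i \<Rightarrow> 'i \<Rightarrow> real)
    \<Rightarrow> real^'i \<Rightarrow> real^'i \<Rightarrow> real^'i \<Rightarrow> real^'i" where
  "curv g C x y w = LC g C x (LC g C y w) - LC g C y (LC g C x w) - LC g C (lbr C x y) w"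

definition ricci :: "('i::finite \<Rightarrow> 'i \<Rightarrow> real) \<Rightarrow> ('i \<Rightarrow> 'i \<Rightarrow> 'i \<Rightarrow> real)
    \<Rightarrow> real^'i \<Rightarrow> real^'i \<Rightarrow> real" where
  "ricci g C x y = (\<Sum>i\<in>UNIV. curv g C (axis i 1) x y $ i)"

definition Ric :: "('i::finite \<Rightarrow> 'i \<Rightarrow> real) \<Rightarrow> ('i \<Rightarrow> 'i \<Rightarrow> 'i \<Rightarrow> real)
    \<Rightarrow> real^'i \<Rightarrow> real^'i" where
  "Ric g C x = (THE w. \<forall>y. ip g w y = ricci g C x y)"

definition is_derivation :: "('i::finite \<Rightarrow> 'i \<Rightarrow> 'i \<Rightarrow> real) \<Rightarrow> (real^'i \<Rightarrow> real^'i) \<Rightarrow> bool" where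
  "is_derivation C D \<longleftrightarrow> linear D \<and>
     (\<forall>x y. D (lbr C x y) = lbr C (D x) y + lbr C x (D y))"

definition nilsoliton :: "('i::finite \<Rightarrow> 'i \<Rightarrow> real) \<Rightarrow> ('i \<Rightarrow> 'i \<Rightarrow> 'i \<Rightarrow> real) \<Rightarrow> bool" where
  "nilsoliton g C \<longleftrightarrow> (\<exists>c D. is_derivation C D \<and> (\<forall>x. Ric g C x = c *\<^sub>R x + D x))"

datatype B = U1 | U2 | Zb | V1 | V2 | E1 | E2

lemma UNIV_B: "(UNIV :: B set) = {U1, U2, Zb, V1, V2, E1, E2}"
  by (auto intro: B.exhaust)

instance B :: finite
  by standard (simp add: UNIV_B)

fun posbr :: "B \<Rightarrow> B \<Rightarrow> B \<Rightarrow> real" where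
  "posbr E1 E2 Zb = 1"
| "posbr V1 V2 Zb = 1"
| "posbr E1 V1 U1 = 1"
| "posbr E2 V1 U2 = 1"
| "posbr E1 V2 U2 = 1"
| "posbr E2 V2 U1 = -1"
| "posbr _ _ _ = 0"

definition Cn :: "B \<Rightarrow> B \<Rightarrow> B \<Rightarrow> real" where
  "Cn i j k = posbr i j k - posbr j i k"

fun gN :: "real \<Rightarrow> real \<Rightarrow> real \<Rightarrow> B \<Rightarrow> B \<Rightarrow> real" where
  "gN \<epsilon> a b U1 V1 = 1"
| "gN \<epsilon> a b V1 U1 = 1"
| "gN \<epsilon> a b U2 V2 = 1"
| "gN \<epsilon> a b V2 U2 = 1"
| "gN \<epsilon> a b Zb Zb = \<epsilon>"
| "gN \<epsilon> a b E1 E1 = a"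
| "gN \<epsilon> a b E2 E2 = b"
| "gN \<epsilon> a b _ _ = 0"

end

theory Submission imports Defs begin

lemma lin_expand:
  fixes f :: "real^'i::finite \<Rightarrow> real"
  assumes "linear f"
  shows "f z = (\<Sum>m\<in>UNIV. z$m * f (axis m 1))"
proof -
  have "f z = f (\<Sum>i\<in>UNIV. z$i *\<^sub>R axis i 1)"
    using basis_expansion[of z] by (simp add: scalar_mult_eq_scaleR)
  also have "\<dots> = (\<Sum>i\<in>UNIV. z$i * f (axis i 1))"
    by (simp add: linear_sum[OF assms] linear_scale[OF assms])
  finally show ?thesis .
qed

lemma ip_add_l: "ip g (x + y) z = ip g x z + ip g y z"
  unfolding ip_def by (simp add: algebra_simps sum.distrib)
lemma ip_add_r: "ip g z (x + y) = ip g z x + ip g z y"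
  unfolding ip_def by (simp add: algebra_simps sum.distrib)
lemma ip_scale_l: "ip g (c *\<^sub>R x) z = c * ip g x z"
  unfolding ip_def by (simp add: algebra_simps sum_distrib_left)
lemma ip_scale_r: "ip g z (c *\<^sub>R x) = c * ip g z x"
  unfolding ip_def by (simp add: algebra_simps sum_distrib_left)
lemma lbr_add_l: "lbr C (x + y) z = lbr C x z + lbr C y z"
  unfolding lbr_def by (simp add: vec_eq_iff algebra_simps sum.distrib)
lemma lbr_add_r: "lbr C z (x + y) = lbr C z x + lbr C z y"
  unfolding lbr_def by (simp add: vec_eq_iff algebra_simps sum.distrib)
lemma lbr_scale_l: "lbr C (c *\<^sub>R x) z = c *\<^sub>R lbr C x z"
  unfolding lbr_def by (simp add: vec_eq_iff algebra_simps sum_distrib_left)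
lemma lbr_scale_r: "lbr C z (c *\<^sub>R x) = c *\<^sub>R lbr C z x"
  unfolding lbr_def by (simp add: vec_eq_iff algebra_simps sum_distrib_left)

lemmas bil = ip_add_l ip_add_r ip_scale_l ip_scale_r lbr_add_l lbr_add_r lbr_scale_l lbr_scale_r

lemma sum_axis: "(\<Sum>j\<in>UNIV. f j * (axis k 1 :: real^'i::finite)$j * h j) = f k * h k"
proof -
  have "(\<Sum>j\<in>UNIV. f j * (axis k 1 :: real^'i)$j * h j) = (\<Sum>j\<in>UNIV. if j = k then f j * h j else 0)"
    by (rule sum.cong) (auto simp: axis_def)
  also have "\<dots> = f k * h k" by simp
  finally show ?thesis .
qed

lemma ip_axis_r: "ip g u (axis k 1) = (\<Sum>i\<in>UNIV. u$i * g i k)"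
  unfolding ip_def by (simp add: sum_axis)

definition K where "K g C x y z = (ip g (lbr C x y) z - ip g (lbr C y z) x + ip g (lbr C z x) y) / 2"

lemma K_lin3: "linear (K g C x y)"
  by (rule linearI) (simp_all add: K_def bil field_simps)
lemma K_lin2: "linear (\<lambda>y. K g C x y z)"
  by (rule linearI) (simp_all add: K_def bil field_simps)


lemma K_lin1: "linear (\<lambda>x. K g C x y z)"
  by (rule linearI) (simp_all add: K_def bil field_simps)

lemma delta_sum: "(\<Sum>m\<in>(UNIV::'i::finite set). a m * (if m = k then 1 else 0)) = (a k::real)"
proof -
  have "(\<Sum>m\<in>(UNIV::'i set). a m * (if m = k then 1 else 0)) = (\<Sum>m\<in>UNIV. if m = k then a m else 0)"
    by (rule sum.cong) auto
  then show ?thesis by simp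
qed

lemma the_ip:
  fixes g :: "'i::finite \<Rightarrow> 'i \<Rightarrow> real"
  assumes sym: "\<And>i j. g i j = g j i"
    and inv: "\<And>i k. (\<Sum>j\<in>UNIV. g i j * g j k) = (if i = k then 1 else 0)"
    and lin: "linear f"
  shows "(THE w. \<forall>z. ip g w z = f z) = (\<chi> i. \<Sum>m\<in>UNIV. g i m * f (axis m 1))"
proof (rule the_equality)
  let ?w = "(\<chi> i. \<Sum>m\<in>UNIV. g i m * f (axis m 1)) :: real^'i"
  have lw: "linear (ip g ?w)" by (rule linearI) (simp_all add: bil)
  have ax: "ip g ?w (axis k 1) = f (axis k 1)" for k
  proof -
    have "ip g ?w (axis k 1) = (\<Sum>i\<in>UNIV. (\<Sum>m\<in>UNIV. g i m * f (axis m 1)) * g i k)"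
      by (simp add: ip_axis_r)
    also have "\<dots> = (\<Sum>i\<in>UNIV. \<Sum>m\<in>UNIV. f (axis m 1) * (g m i * g i k))"
      by (simp add: sum_distrib_right sum_distrib_left sym mult_ac)
    also have "\<dots> = (\<Sum>m\<in>UNIV. \<Sum>i\<in>UNIV. f (axis m 1) * (g m i * g i k))"
      by (rule sum.swap)
    also have "\<dots> = (\<Sum>m\<in>UNIV. f (axis m 1) * (\<Sum>i\<in>UNIV. g m i * g i k))"
      by (simp add: sum_distrib_left)
    also have "\<dots> = f (axis k 1)"
      by (simp add: inv delta_sum)
    finally show ?thesis .
  qed
  show "\<forall>z. ip g ?w z = f z"
  proof
    fix z
    show "ip g ?w z = f z"
      using lin_expand[OF lw, of z] lin_expand[OF lin, of z] ax by simp
  qed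
next
  fix w assume h: "\<forall>z. ip g w z = f z"
  show "w = (\<chi> i. \<Sum>m\<in>UNIV. g i m * f (axis m 1))"
  proof (subst vec_eq_iff, rule allI)
    fix i
    have "(\<Sum>m\<in>UNIV. g i m * f (axis m 1)) = (\<Sum>m\<in>UNIV. g i m * (\<Sum>a\<in>UNIV. w$a * g a m))"
      using h by (simp add: ip_axis_r[symmetric])
    also have "\<dots> = (\<Sum>m\<in>UNIV. \<Sum>a\<in>UNIV. w$a * (g a m * g m i))"
      by (simp add: sum_distrib_left sym mult_ac)
    also have "\<dots> = (\<Sum>a\<in>UNIV. \<Sum>m\<in>UNIV. w$a * (g a m * g m i))"
      by (rule sum.swap)
    also have "\<dots> = (\<Sum>a\<in>UNIV. w$a * (\<Sum>m\<in>UNIV. g a m * g m i))"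
      by (simp add: sum_distrib_left)
    also have "\<dots> = w$i" by (simp add: inv delta_sum)
    finally show "w$i = (\<chi> i. \<Sum>m\<in>UNIV. g i m * f (axis m 1))$i" by simp
  qed
qed

lemma LC_eq:
  fixes g :: "'i::finite \<Rightarrow> 'i \<Rightarrow> real"
  assumes sym: "\<And>i j. g i j = g j i"
    and inv: "\<And>i k. (\<Sum>j\<in>UNIV. g i j * g j k) = (if i = k then 1 else 0)"
  shows "LC g C x y = (\<chi> i. \<Sum>m\<in>UNIV. g i m * K g C x y (axis m 1))"
  unfolding LC_def K_def[symmetric] by (rule the_ip[OF sym inv K_lin3])


locale nd =
  fixes g :: "'i::finite \<Rightarrow> 'i \<Rightarrow> real"
  assumes sym: "\<And>i j. g i j = g j i"
    and inv: "\<And>i k. (\<Sum>j\<in>UNIV. g i j * g j k) = (if i = k then 1 else 0)"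
begin

lemma LCe: "LC g C x y = (\<chi> i. \<Sum>m\<in>UNIV. g i m * K g C x y (axis m 1))"
  by (rule LC_eq[OF sym inv])

lemma LC_add2: "LC g C u (v + w) = LC g C u v + LC g C u w"
  by (simp add: LCe vec_eq_iff linear_add[OF K_lin2] algebra_simps sum.distrib)
lemma LC_scale2: "LC g C u (c *\<^sub>R v) = c *\<^sub>R LC g C u v"
  by (simp add: LCe vec_eq_iff linear_scale[OF K_lin2] algebra_simps sum_distrib_left)
lemma LC_add1: "LC g C (v + w) u = LC g C v u + LC g C w u"
  by (simp add: LCe vec_eq_iff linear_add[OF K_lin1] algebra_simps sum.distrib)
lemma LC_scale1: "LC g C (c *\<^sub>R v) u = c *\<^sub>R LC g C v u"
  by (simp add: LCe vec_eq_iff linear_scale[OF K_lin1] algebra_simps sum_distrib_left)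

lemma LC_exp2: "LC g C u v $ c = (\<Sum>b\<in>UNIV. v$b * LC g C u (axis b 1) $ c)"
proof -
  have "linear (\<lambda>v. LC g C u v $ c)"
    by (rule linearI) (simp_all add: LC_add2 LC_scale2)
  from lin_expand[OF this] show ?thesis .
qed
lemma LC_exp1: "LC g C v u $ c = (\<Sum>b\<in>UNIV. v$b * LC g C (axis b 1) u $ c)"
proof -
  have "linear (\<lambda>v. LC g C v u $ c)"
    by (rule linearI) (simp_all add: LC_add1 LC_scale1)
  from lin_expand[OF this] show ?thesis .
qed

lemma ricci_lin: "linear (ricci g C x)"
proof (rule linearI)
  fix b1 b2
  show "ricci g C x (b1 + b2) = ricci g C x b1 + ricci g C x b2"
    unfolding ricci_def sum.distrib[symmetric]
    by (rule sum.cong) (simp_all add: curv_def LC_add2 algebra_simps)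
next
  fix r b
  show "ricci g C x (r *\<^sub>R b) = r *\<^sub>R ricci g C x b"
    by (simp add: ricci_def curv_def LC_scale2 sum_distrib_left algebra_simps)
qed

lemma Ric_eq: "Ric g C x = (\<chi> i. \<Sum>m\<in>UNIV. g i m * ricci g C x (axis m 1))"
  unfolding Ric_def by (rule the_ip[OF sym inv ricci_lin])

end

lemma axis_sum_l: "(\<Sum>j\<in>UNIV. (axis k 1 :: real^'i::finite)$j * h j) = h k"
  using sum_axis[where f="\<lambda>_. 1" and h=h and k=k] by simp

lemma lbr_axis: "lbr C (axis a 1) (axis b 1) = (\<chi> k. C a b k)"
  unfolding lbr_def by (simp add: vec_eq_iff mult.assoc sum_distrib_left[symmetric] axis_sum_l)


lemma lbr_axis_r: "lbr C u (axis b 1) $ k = (\<Sum>i\<in>UNIV. u$i * C i b k)"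
  unfolding lbr_def vec_lambda_beta by (simp only: sum_axis)

context nd begin

lemma Gam: "LC g C (axis a 1) (axis b 1) $ c = (\<Sum>m\<in>UNIV. g c m *
   ((\<Sum>k\<in>UNIV. C a b k * g k m) - (\<Sum>k\<in>UNIV. C b m k * g k a) + (\<Sum>k\<in>UNIV. C m a k * g k b)) / 2)"
  by (simp add: LCe K_def ip_axis_r lbr_axis)

lemma ricci_ax: "ricci g C (axis x 1) (axis y 1) = (\<Sum>i\<in>UNIV.
   (\<Sum>b\<in>UNIV. LC g C (axis x 1) (axis y 1) $ b * LC g C (axis i 1) (axis b 1) $ i)
 - (\<Sum>b\<in>UNIV. LC g C (axis i 1) (axis y 1) $ b * LC g C (axis x 1) (axis b 1) $ i)
 - (\<Sum>a\<in>UNIV. C i x a * LC g C (axis a 1) (axis y 1) $ i))"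
  unfolding ricci_def curv_def
proof (rule sum.cong)
  fix i
  have h1: "LC g C (axis i 1) (LC g C (axis x 1) (axis y 1)) $ i = (\<Sum>b\<in>UNIV. LC g C (axis x 1) (axis y 1) $ b * LC g C (axis i 1) (axis b 1) $ i)"
    by (rule LC_exp2)
  have h2: "LC g C (axis x 1) (LC g C (axis i 1) (axis y 1)) $ i = (\<Sum>b\<in>UNIV. LC g C (axis i 1) (axis y 1) $ b * LC g C (axis x 1) (axis b 1) $ i)"
    by (rule LC_exp2)
  have h3: "LC g C (lbr C (axis i 1) (axis x 1)) (axis y 1) $ i = (\<Sum>a\<in>UNIV. C i x a * LC g C (axis a 1) (axis y 1) $ i)"
    by (subst LC_exp1) (simp add: lbr_axis)
  show "(LC g C (axis i 1) (LC g C (axis x 1) (axis y 1)) - LC g C (axis x 1) (LC g C (axis i 1) (axis y 1)) - LC g C (lbr C (axis i 1) (axis x 1)) (axis y 1)) $ i = (\<Sum>b\<in>UNIV. LC g C (axis x 1) (axis y 1) $ b * LC g C (axis i 1) (axis b 1) $ i)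
 - (\<Sum>b\<in>UNIV. LC g C (axis i 1) (axis y 1) $ b * LC g C (axis x 1) (axis b 1) $ i)
 - (\<Sum>a\<in>UNIV. C i x a * LC g C (axis a 1) (axis y 1) $ i)"
    using h1 h2 h3 by simp
qed simp

end

definition Gm where "Gm e a b x y z = (\<Sum>m\<in>UNIV. gN e a b z m *
   ((\<Sum>k\<in>UNIV. Cn x y k * gN e a b k m) - (\<Sum>k\<in>UNIV. Cn y m k * gN e a b k x) + (\<Sum>k\<in>UNIV. Cn m x k * gN e a b k y)) / 2)"

definition Rc where "Rc e a b x y = (\<Sum>i\<in>UNIV.
   (\<Sum>c\<in>UNIV. Gm e a b x y c * Gm e a b i c i)
 - (\<Sum>c\<in>UNIV. Gm e a b i y c * Gm e a b x c i)
 - (\<Sum>k\<in>UNIV. Cn i x k * Gm e a b k y i))"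

lemma Rc1: "Rc e a b V1 U1 = 0"
  by (simp add: Rc_def Gm_def UNIV_B Cn_def)
lemma Rc2: "Rc e a b V2 U2 = 0"
  by (simp add: Rc_def Gm_def UNIV_B Cn_def)
lemma Rc3: "Rc e a b E1 E1 = - (b * e / 2)"
  by (simp add: Rc_def Gm_def UNIV_B Cn_def)
lemma Rc4: "Rc e a b E2 E2 = - (a * e / 2)"
  by (simp add: Rc_def Gm_def UNIV_B Cn_def)
lemma Rc5: "Rc e a b Zb Zb = a * (b * (e * e)) / 2"
  by (simp add: Rc_def Gm_def UNIV_B Cn_def)

lemma lbr_axis_l: "lbr C (axis a 1) u $ k = (\<Sum>j\<in>UNIV. u$j * C a j k)"
  unfolding lbr_def vec_lambda_beta
  by (simp add: mult.assoc sum_distrib_left[symmetric] axis_sum_l)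

lemma nd_gN:
  assumes "e * e = 1" "a * a = 1" "b * b = 1"
  shows "nd (gN e a b)"
proof
  fix i j show "gN e a b i j = gN e a b j i" by (cases i; cases j) simp_all
next
  fix i k show "(\<Sum>j\<in>UNIV. gN e a b i j * gN e a b j k) = (if i = k then 1 else 0)"
    using assms by (cases i; cases k) (simp_all add: UNIV_B)
qed

theorem mainTheorem5:
  fixes \<epsilon> \<epsilon>1 \<epsilon>2 :: real
  assumes "\<epsilon> \<in> {1, -1}" and "\<epsilon>1 \<in> {1, -1}" and "\<epsilon>2 \<in> {1, -1}"
  shows "\<not> nilsoliton (gN \<epsilon> \<epsilon>1 \<epsilon>2) Cn"
proof
  let ?g = "gN \<epsilon> \<epsilon>1 \<epsilon>2"
  have sq: "\<epsilon> * \<epsilon> = 1" "\<epsilon>1 * \<epsilon>1 = 1" "\<epsilon>2 * \<epsilon>2 = 1" using assms by auto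
  interpret nd ?g by (rule nd_gN[OF sq])
  have R: "ricci ?g Cn (axis x 1) (axis y 1) = Rc \<epsilon> \<epsilon>1 \<epsilon>2 x y" for x y
    unfolding ricci_ax Gam Rc_def Gm_def ..
  have RicC: "Ric ?g Cn u $ k = (\<Sum>m\<in>UNIV. ?g k m * ricci ?g Cn u (axis m 1))" for u k
    by (simp add: Ric_eq)
  have rV1: "Ric ?g Cn (axis V1 1) $ V1 = 0"
    by (simp add: RicC UNIV_B R Rc1)
  have rV2: "Ric ?g Cn (axis V2 1) $ V2 = 0"
    by (simp add: RicC UNIV_B R Rc2)
  have rE1: "Ric ?g Cn (axis E1 1) $ E1 = \<epsilon>1 * (- (\<epsilon>2 * \<epsilon> / 2))"
    by (simp add: RicC UNIV_B R Rc3)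
  have rE2: "Ric ?g Cn (axis E2 1) $ E2 = \<epsilon>2 * (- (\<epsilon>1 * \<epsilon> / 2))"
    by (simp add: RicC UNIV_B R Rc4)
  have rZ: "Ric ?g Cn (axis Zb 1) $ Zb = \<epsilon> * (\<epsilon>1 * (\<epsilon>2 * (\<epsilon> * \<epsilon>)) / 2)"
    by (simp add: RicC UNIV_B R Rc5)
  have bV: "lbr Cn (axis V1 1) (axis V2 1) = axis Zb 1"
    unfolding lbr_axis vec_eq_iff by (auto simp: Cn_def axis_def intro: B.exhaust) (case_tac i; simp)+
  have bE: "lbr Cn (axis E1 1) (axis E2 1) = axis Zb 1"
    unfolding lbr_axis vec_eq_iff by (auto simp: Cn_def axis_def intro: B.exhaust) (case_tac i; simp)+
  assume "nilsoliton ?g Cn"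
  then obtain c D where der: "is_derivation Cn D" and ric: "\<And>x. Ric ?g Cn x = c *\<^sub>R x + D x"
    unfolding nilsoliton_def by blast
  have Dc: "D x $ k = Ric ?g Cn x $ k - c * x $ k" for x k
    using ric[of x] by simp
  have dd: "D (lbr Cn x y) = lbr Cn (D x) y + lbr Cn x (D y)" for x y
    using der unfolding is_derivation_def by blast
  have "D (lbr Cn (axis V1 1) (axis V2 1)) $ Zb = (lbr Cn (D (axis V1 1)) (axis V2 1) + lbr Cn (axis V1 1) (D (axis V2 1))) $ Zb"
    by (simp only: dd)
  hence e1: "Ric ?g Cn (axis Zb 1) $ Zb - c = (Ric ?g Cn (axis V1 1) $ V1 - c) + (Ric ?g Cn (axis V2 1) $ V2 - c)"
    unfolding bV by (simp add: lbr_axis_l lbr_axis_r UNIV_B Cn_def Dc; simp add: axis_def)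
  have "D (lbr Cn (axis E1 1) (axis E2 1)) $ Zb = (lbr Cn (D (axis E1 1)) (axis E2 1) + lbr Cn (axis E1 1) (D (axis E2 1))) $ Zb"
    by (simp only: dd)
  hence e2: "Ric ?g Cn (axis Zb 1) $ Zb - c = (Ric ?g Cn (axis E1 1) $ E1 - c) + (Ric ?g Cn (axis E2 1) $ E2 - c)"
    unfolding bE by (simp add: lbr_axis_l lbr_axis_r UNIV_B Cn_def Dc; simp add: axis_def)
  from e1 e2 rV1 rV2 rE1 rE2 rZ assms show False by auto
qed

end
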